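(* Let $\varphi \in H^\infty$ with $\|\varphi\|_\infty \le 1$. (1) If $f \in H^2$ is $T_\varphi$-inner and $I$ is any inner function, then $If$ is $T_\varphi$-inner. (2) If $f \in H^2$ is $T_\varphi$-inner and $\Theta$ is any inner divisor of $f$ (i.e. $\Theta$ is inner and $f/\Theta \in H^2$), then $f/\Theta$ is $T_\varphi$-inner. (3) Every unit vector belonging to $\ker T_{\overline{\varphi}}$ is $T_\varphi$-inner.
   Context: $H^2$ is the Hardy space on the unit disk $\mathbb{D}$ with inner product $\langle f,g\rangle=\int_{\mathbb{T}} f\overline{g}\,dm$ ($m$ normalized Lebesgue measure on the unit circle $\mathbb{T}$; functions identified with their radial boundary values). An inner function is an $H^\infty$ function with unimodular boundary values a.e. For $\varphi\in H^\infty$, $T_\varphi f=\varphi f$ on $H^2$, and $T_{\overline{\varphi}} f = P(\overline{\varphi} f)$ where $P$ is the orthogonal (Riesz) projection of $L^2(\mathbb{T},m)$ onto $H^2$. A unit vector $f\in H^2$ is called $T_\varphi$-inner if $\langle T_\varphi^n f, f\rangle = 0$ for all $n\ge 1$. *)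

theory Defs
  imports "HOL-Analysis.Analysis"
begin

text \<open>Functions on the unit circle are parametrised by t in [0, 2 pi], i.e. f t stands
  for the boundary value at exp(i t). Normalised Lebesgue measure m is (1/(2 pi)) dt.\<close>

abbreviation circ :: "real measure" where
  "circ \<equiv> lebesgue_on {0..2*pi}"

definition cint :: "(real \<Rightarrow> complex) \<Rightarrow> complex" where
  "cint g = integral\<^sup>L circ g / complex_of_real (2*pi)"

definition L2 :: "(real \<Rightarrow> complex) \<Rightarrow> bool" where
  "L2 f \<longleftrightarrow> f \<in> borel_measurable circ \<and> integrable circ (\<lambda>t. (cmod (f t))^2)"

definition fcoeff :: "(real \<Rightarrow> complex) \<Rightarrow> int \<Rightarrow> complex" where
  "fcoeff f n = cint (\<lambda>t. f t * exp (- \<i> * of_int n * of_real t))"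

definition H2 :: "(real \<Rightarrow> complex) \<Rightarrow> bool" where
  "H2 f \<longleftrightarrow> L2 f \<and> (\<forall>n::int. n < 0 \<longrightarrow> fcoeff f n = 0)"

definition Hinf :: "(real \<Rightarrow> complex) \<Rightarrow> bool" where
  "Hinf f \<longleftrightarrow> H2 f \<and> (\<exists>C. AE t in circ. cmod (f t) \<le> C)"

definition inner_fun :: "(real \<Rightarrow> complex) \<Rightarrow> bool" where
  "inner_fun I \<longleftrightarrow> Hinf I \<and> (AE t in circ. cmod (I t) = 1)"

definition hip :: "(real \<Rightarrow> complex) \<Rightarrow> (real \<Rightarrow> complex) \<Rightarrow> complex" where
  "hip f g = cint (\<lambda>t. f t * cnj (g t))"

definition is_riesz_proj :: "(real \<Rightarrow> complex) \<Rightarrow> (real \<Rightarrow> complex) \<Rightarrow> bool" where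
  "is_riesz_proj g h \<longleftrightarrow> H2 h \<and> (\<forall>k. H2 k \<longrightarrow> hip (\<lambda>t. g t - h t) k = 0)"

text \<open>T_phi-inner: unit vector f in H^2 with <T_phi^n f, f> = 0 for n >= 1.\<close>
definition T_inner :: "(real \<Rightarrow> complex) \<Rightarrow> (real \<Rightarrow> complex) \<Rightarrow> bool" where
  "T_inner \<phi> f \<longleftrightarrow> H2 f \<and> hip f f = 1 \<and>
     (\<forall>n::nat. n \<ge> 1 \<longrightarrow> hip (\<lambda>t. (\<phi> t)^n * f t) f = 0)"

end

theory Submission
  imports Defs
begin


definition ex :: "int \<Rightarrow> real \<Rightarrow> complex" where
  "ex k t = exp (\<i> * of_int k * of_real t)"

definition tp :: "(complex \<times> int) list \<Rightarrow> real \<Rightarrow> complex" where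
  "tp xs t = (\<Sum>(c,k)\<leftarrow>xs. c * ex k t)"

lemma ex_mult: "ex j t * ex k t = ex (j+k) t"
  by (simp add: ex_def exp_add[symmetric] algebra_simps)

lemma cnj_ex: "cnj (ex k t) = ex (-k) t"
  by (simp add: ex_def exp_cnj)

lemma norm_ex[simp]: "cmod (ex k t) = 1"
proof -
  have "ex k t = cis (of_int k * t)" by (simp add: ex_def cis_conv_exp mult.commute mult.left_commute)
  then show ?thesis by simp
qed

lemma ex_0[simp]: "ex 0 t = 1" by (simp add: ex_def)

lemma cont_ex: "continuous_on A (ex k)"
  unfolding ex_def by (intro continuous_intros)

lemma cont_tp: "continuous_on A (tp xs)"
  unfolding tp_def
proof (induction xs)
  case Nil then show ?case by simp
next
  case (Cons a xs) then show ?case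
    by (cases a) (simp, intro continuous_intros cont_ex)
qed

lemma space_circ[simp]: "space circ = {0..2*pi}" by simp

lemma meas_ex[measurable]: "ex k \<in> borel_measurable circ"
  by (rule continuous_imp_measurable_on_sets_lebesgue[OF cont_ex]) auto

lemma meas_tp[measurable]: "tp xs \<in> borel_measurable circ"
  by (rule continuous_imp_measurable_on_sets_lebesgue[OF cont_tp]) auto

lemma integrable_ex: "integrable circ (ex k)"
  by (rule continuous_imp_integrable_real[OF cont_ex])

lemma integrable_tp: "integrable circ (tp xs)"
  by (rule continuous_imp_integrable_real[OF cont_tp])

lemma tp_Nil[simp]: "tp [] t = 0" by (simp add: tp_def)
lemma tp_Cons[simp]: "tp ((c,k)#xs) t = c * ex k t + tp xs t" by (simp add: tp_def)
lemma tp_append[simp]: "tp (xs@ys) t = tp xs t + tp ys t" by (simp add: tp_def)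

lemma tp_bound: "cmod (tp xs t) \<le> (\<Sum>(c,k)\<leftarrow>xs. cmod c)"
proof (induction xs)
  case Nil then show ?case by simp
next
  case (Cons a xs)
  obtain c k where a: "a = (c,k)" by fastforce
  have "cmod (tp (a#xs) t) \<le> cmod (c * ex k t) + cmod (tp xs t)"
    unfolding a tp_Cons by (rule norm_triangle_ineq)
  also have "\<dots> \<le> cmod c + (\<Sum>(c,k)\<leftarrow>xs. cmod c)" using Cons by (simp add: norm_mult)
  finally show ?case by (simp add: a)
qed

lemma int_ex: "integral\<^sup>L circ (ex k) = (if k = 0 then complex_of_real (2*pi) else 0)"
proof -
  have "integral\<^sup>L circ (ex k) = integral {0..2*pi} (ex k)"
    by (rule lebesgue_integral_eq_integral[OF integrable_ex]) auto
  also have "\<dots> = (if k = 0 then complex_of_real (2*pi) else 0)"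
  proof (cases "k = 0")
    case True
    have "ex k = (\<lambda>_. 1)" using True by (simp add: fun_eq_iff)
    then show ?thesis using True by (simp add: mult.commute scaleR_conv_of_real)
  next
    case False
    define F where "F t = ex k t / (\<i> * of_int k)" for t
    have d: "(F has_vector_derivative ex k x) (at x within {0..2*pi})" for x
    proof -
      have "((\<lambda>z. exp (\<i> * of_int k * z) / (\<i> * of_int k)) has_field_derivative exp (\<i> * of_int k * of_real x)) (at (of_real x))"
        using False by (auto intro!: derivative_eq_intros)
      from has_vector_derivative_real_field[OF this] show ?thesis unfolding F_def ex_def .
    qed
    have "(ex k has_integral F (2*pi) - F 0) {0..2*pi}"
      by (rule fundamental_theorem_of_calculus) (use d in auto)
    moreover have "ex k (2*pi) = 1"
    proof -
      have "ex k (2*pi) = cis (2 * pi * of_int k)"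
        by (simp add: ex_def cis_conv_exp mult.commute mult.left_commute)
      also have "\<dots> = 1" by (rule cis_multiple_2pi) simp
      finally show ?thesis .
    qed
    ultimately have "(ex k has_integral 0) {0..2*pi}" by (simp add: F_def ex_def)
    then show ?thesis using False by (simp add: integral_unique)
  qed
  finally show ?thesis .
qed

lemma cint_ex: "cint (ex k) = (if k = 0 then 1 else 0)"
  by (simp add: cint_def int_ex)



fun prodl :: "(complex \<times> int) list \<Rightarrow> (complex \<times> int) list \<Rightarrow> (complex \<times> int) list" where
  "prodl [] ys = []"
| "prodl ((c,k)#xs) ys = map (\<lambda>(d,j). (c*d, k+j)) ys @ prodl xs ys"

lemma tp_map_mult: "tp (map (\<lambda>(d,j). (c*d, k+j)) ys) t = c * ex k t * tp ys t"
proof (induction ys)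
  case Nil then show ?case by simp
next
  case (Cons a ys) then show ?case
    by (cases a) (simp add: ex_mult[symmetric] algebra_simps)
qed

lemma tp_prodl: "tp (prodl xs ys) t = tp xs t * tp ys t"
proof (induction xs)
  case Nil then show ?case by simp
next
  case (Cons a xs) then show ?case
    by (cases a) (simp add: tp_map_mult algebra_simps)
qed

definition trigc :: "(complex \<Rightarrow> real) \<Rightarrow> bool" where
  "trigc q \<longleftrightarrow> continuous_on (sphere 0 1) q \<and> (\<exists>xs. \<forall>t. complex_of_real (q (cis t)) = tp xs t)"

lemma cos_tp: "complex_of_real (cos t) = tp [(1/2,1),(1/2,-1)] t"
  by (simp add: ex_def Euler field_simps)

lemma sin_tp: "complex_of_real (sin t) = tp [(1/(2*\<i>),1),(-1/(2*\<i>),-1)] t"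
  by (simp add: ex_def Euler field_simps)

lemma SW_circle:
  assumes "continuous_on (sphere 0 1) (u::complex \<Rightarrow> real)" "e > 0"
  shows "\<exists>xs. \<forall>t. cmod (complex_of_real (u (cis t)) - tp xs t) < e"
proof -
  have "\<exists>g. trigc g \<and> (\<forall>x \<in> sphere 0 1. \<bar>u x - g x\<bar> < e)"
  proof (rule Stone_Weierstrass_HOL[where P = trigc])
    show "compact (sphere (0::complex) 1)" by simp
    show "trigc (\<lambda>x. c)" for c
      unfolding trigc_def by (intro conjI continuous_intros exI[of _ "[(complex_of_real c,0)]"]) simp
    show "continuous_on (sphere 0 1) f" if "trigc f" for f using that by (simp add: trigc_def)
    show "trigc (\<lambda>x. f x + g x)" if "trigc f \<and> trigc g" for f g
    proof -
      from that obtain xs ys where "\<forall>t. complex_of_real (f (cis t)) = tp xs t"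
        "\<forall>t. complex_of_real (g (cis t)) = tp ys t" "continuous_on (sphere 0 1) f" "continuous_on (sphere 0 1) g"
        by (auto simp: trigc_def)
      then show ?thesis unfolding trigc_def
        by (intro conjI continuous_intros exI[of _ "xs@ys"]) auto
    qed
    show "trigc (\<lambda>x. f x * g x)" if "trigc f \<and> trigc g" for f g
    proof -
      from that obtain xs ys where "\<forall>t. complex_of_real (f (cis t)) = tp xs t"
        "\<forall>t. complex_of_real (g (cis t)) = tp ys t" "continuous_on (sphere 0 1) f" "continuous_on (sphere 0 1) g"
        by (auto simp: trigc_def)
      then show ?thesis unfolding trigc_def
        by (intro conjI continuous_intros exI[of _ "prodl xs ys"]) (auto simp: tp_prodl)
    qed
    show "\<exists>f. trigc f \<and> f x \<noteq> f y" if "x \<in> sphere 0 1 \<and> y \<in> sphere 0 1 \<and> x \<noteq> y" for x y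
    proof (cases "Re x = Re y")
      case False
      have "trigc Re" unfolding trigc_def
        by (intro conjI continuous_intros exI[of _ "[(1/2,1),(1/2,-1)]"]) (use cos_tp in simp)
      then show ?thesis using False by blast
    next
      case True
      then have "Im x \<noteq> Im y" using that complex_eqI by blast
      moreover have "trigc Im" unfolding trigc_def
        by (intro conjI continuous_intros exI[of _ "[(1/(2*\<i>),1),(-1/(2*\<i>),-1)]"]) (use sin_tp in simp)
      ultimately show ?thesis by blast
    qed
  qed (use assms in auto)
  then obtain g xs where g: "\<forall>x \<in> sphere 0 1. \<bar>u x - g x\<bar> < e" "\<forall>t. complex_of_real (g (cis t)) = tp xs t"
    by (auto simp: trigc_def)
  show ?thesis
  proof (intro exI allI)
    fix t
    have "cmod (complex_of_real (u (cis t)) - tp xs t) = \<bar>u (cis t) - g (cis t)\<bar>"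
      using g(2) by (metis norm_of_real of_real_diff)
    also have "\<dots> < e" using g(1) by simp
    finally show "cmod (complex_of_real (u (cis t)) - tp xs t) < e" .
  qed
qed



lemma sets_circ: "A \<in> sets circ \<longleftrightarrow> A \<in> sets lebesgue \<and> A \<subseteq> {0..2*pi}"
  by (subst sets_restrict_space_iff) auto

lemma emeasure_circ: "A \<in> sets circ \<Longrightarrow> emeasure circ A = emeasure lebesgue A"
  by (subst emeasure_restrict_space) (auto simp: sets_circ)

lemma emeasure_circ_space: "emeasure circ {0..2*pi} = ennreal (2*pi)"
proof -
  have "emeasure circ {0..2*pi} = emeasure lebesgue {0..2*pi::real}"
    by (rule emeasure_circ) (simp add: sets_circ)
  also have "\<dots> = emeasure lborel {0..2*pi::real}" by simp
  also have "\<dots> = ennreal (2*pi)" by (simp add: emeasure_lborel_Icc)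
  finally show ?thesis .
qed

lemma cis_inj_aux:
  assumes "cis a = cis b" "0 < a" "a < 2*pi" "0 \<le> b" "b \<le> 2*pi"
  shows "a = b"
proof -
  have "cis (a - b) = 1" using assms(1) by (simp add: cis_divide[symmetric])
  then have "cos (a - b) = 1" by (metis cis.sel(1) one_complex.sel(1))
  then obtain n :: int where n: "a - b = real_of_int n * 2 * pi" by (auto simp: cos_one_2pi_int)
  have "-2*pi < a - b" "a - b < 2*pi" using assms by auto
  then have "(-1) * (2*pi) < real_of_int n * (2*pi)" "real_of_int n * (2*pi) < 1 * (2*pi)"
    using n by (simp_all add: mult.assoc)
  then have "real_of_int n < 1"
    using pi_gt_zero by (simp_all add: mult_less_cancel_right)
  have "-1 < real_of_int n"
  proof (rule ccontr)
    assume "\<not> -1 < real_of_int n"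
    then have "real_of_int n * (2*pi) \<le> (-1) * (2*pi)"
      by (intro mult_right_mono) (use pi_gt_zero in auto)
    then show False using \<open>(-1) * (2*pi) < real_of_int n * (2*pi)\<close> by linarith
  qed
  then have "n = 0" using \<open>real_of_int n < 1\<close> by linarith
  then show ?thesis using n by simp
qed

lemma ennreal_le_2:
  assumes "0 \<le> b" "0 \<le> c" "a \<le> 2*b+2*c"
  shows "ennreal a \<le> 2 * ennreal b + 2 * ennreal c"
proof -
  have "ennreal a \<le> ennreal (2*b+2*c)" by (rule ennreal_leI) fact
  also have "\<dots> = 2 * ennreal b + 2 * ennreal c"
    using assms by (simp add: ennreal_plus ennreal_mult)
  finally show ?thesis .
qed

definition sqd :: "(real \<Rightarrow> complex) \<Rightarrow> (real \<Rightarrow> complex) \<Rightarrow> ennreal" where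
  "sqd u v = (\<integral>\<^sup>+t. ennreal ((cmod (u t - v t))^2) \<partial>circ)"

definition apx :: "(real \<Rightarrow> complex) \<Rightarrow> bool" where
  "apx u \<longleftrightarrow> (\<forall>e>0. \<exists>xs. sqd u (tp xs) < ennreal e)"

lemma sqd_tri:
  assumes [measurable]: "u \<in> borel_measurable circ" "v \<in> borel_measurable circ" "w \<in> borel_measurable circ"
  shows "sqd u w \<le> 2 * sqd u v + 2 * sqd v w"
proof -
  have pt: "(cmod (u t - w t))^2 \<le> 2 * (cmod (u t - v t))^2 + 2 * (cmod (v t - w t))^2" for t
  proof -
    have "cmod (u t - w t) \<le> cmod (u t - v t) + cmod (v t - w t)"
      by (metis diff_add_cancel norm_triangle_ineq add_diff_eq diff_diff_eq2)
    then have "(cmod (u t - w t))^2 \<le> (cmod (u t - v t) + cmod (v t - w t))^2"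
      by (simp add: power_mono)
    also have "\<dots> \<le> 2 * (cmod (u t - v t))^2 + 2 * (cmod (v t - w t))^2"
    proof -
      fix a b :: real
      have "0 \<le> (cmod (u t - v t) - cmod (v t - w t))^2" by simp
      then show ?thesis by (simp add: power2_eq_square algebra_simps)
    qed
    finally show ?thesis .
  qed
  have "sqd u w \<le> (\<integral>\<^sup>+t. 2 * ennreal ((cmod (u t - v t))^2) + 2 * ennreal ((cmod (v t - w t))^2) \<partial>circ)"
    unfolding sqd_def
    by (intro nn_integral_mono) (use pt in \<open>auto intro!: ennreal_le_2\<close>)
  also have "\<dots> = 2 * sqd u v + 2 * sqd v w"
    unfolding sqd_def by (simp add: nn_integral_add nn_integral_cmult)
  finally show ?thesis .
qed

lemma sqd_unif:
  assumes "\<And>t. t \<in> {0..2*pi} \<Longrightarrow> cmod (u t - v t) \<le> d"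
  shows "sqd u v \<le> ennreal (d^2 * (2*pi))"
proof -
  have "sqd u v \<le> (\<integral>\<^sup>+t. ennreal (d^2) \<partial>circ)"
    unfolding sqd_def
  proof (intro nn_integral_mono)
    fix t assume "t \<in> space circ"
    then have "cmod (u t - v t) \<le> d" using assms by simp
    then show "ennreal ((cmod (u t - v t))^2) \<le> ennreal (d^2)"
      by (intro ennreal_leI power_mono) auto
  qed
  also have "\<dots> = ennreal (d^2 * (2*pi))"
    by (simp add: nn_integral_const emeasure_circ_space ennreal_mult)
  finally show ?thesis .
qed



lemma cont_cis: "continuous_on A cis"
proof -
  have "cis = (\<lambda>t. exp (\<i> * complex_of_real t))" by (simp add: fun_eq_iff cis_conv_exp)
  then show ?thesis by (auto intro!: continuous_intros)
qed

lemma two_ennreal: "0 \<le> a \<Longrightarrow> 2 * ennreal a = ennreal (2*a)"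
  by (simp add: ennreal_mult)

lemma apx_indicator:
  assumes A: "A \<in> sets circ"
  shows "apx (\<lambda>t. complex_of_real (indicator A t))"
  unfolding apx_def
proof (intro allI impI)
  fix e :: real assume e: "e > 0"
  have Aleb: "A \<in> sets lebesgue" and Asub: "A \<subseteq> {0..2*pi}" using A by (auto simp: sets_circ)
  define A' where "A' = A \<inter> {0<..<2*pi}"
  have A'leb: "A' \<in> sets lebesgue" unfolding A'_def using Aleb by auto
  obtain T where T: "closed T" "T \<subseteq> A'" "A' - T \<in> lmeasurable" "emeasure lebesgue (A' - T) < ennreal (e/8)"
    using sets_lebesgue_inner_closed[OF A'leb, of "e/8"] e by auto
  obtain U where U: "open U" "A' \<subseteq> U" "U - A' \<in> lmeasurable" "emeasure lebesgue (U - A') < ennreal (e/8)"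
    using sets_lebesgue_outer_open[OF A'leb, of "e/8"] e by auto
  have Uleb: "U \<in> sets lebesgue" using U(1) by (metis borel_open sets_completionI_sets sets_lborel)
  have Tleb: "T \<in> sets lebesgue" using T(1) by (metis borel_closed sets_completionI_sets sets_lborel)
  define U' where "U' = U \<inter> {0<..<2*pi}"
  define C where "C = {0..2*pi} - U'"
  have "T \<subseteq> {0..2*pi}" using T(2) Asub unfolding A'_def by auto
  then have "bounded T" by (meson bounded_closed_interval bounded_subset)
  then have "compact T" using T(1) by (simp add: compact_eq_bounded_closed)
  have "closed C" unfolding C_def U'_def using U(1) by (intro closed_Diff) auto
  moreover have "bounded C" unfolding C_def by (meson Diff_subset bounded_closed_interval bounded_subset)
  ultimately have "compact C" by (simp add: compact_eq_bounded_closed)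
  have cT: "closed (cis ` T)" by (intro compact_imp_closed compact_continuous_image cont_cis) fact
  have cC: "closed (cis ` C)" by (intro compact_imp_closed compact_continuous_image cont_cis) fact
  have disj: "cis ` T \<inter> cis ` C = {}"
  proof (rule ccontr)
    assume "cis ` T \<inter> cis ` C \<noteq> {}"
    then obtain a b where ab: "a \<in> T" "b \<in> C" "cis a = cis b" by auto
    have a: "0 < a" "a < 2*pi" "a \<in> U" using ab(1) T(2) U(2) unfolding A'_def by auto
    have b: "0 \<le> b" "b \<le> 2*pi" "b \<notin> U'" using ab(2) unfolding C_def by auto
    have "a = b" using cis_inj_aux[OF ab(3) a(1,2) b(1,2)] .
    then show False using a b unfolding U'_def by auto
  qed
  obtain psi :: "complex \<Rightarrow> real" where psi: "continuous_on UNIV psi" "\<And>x. psi x \<in> closed_segment 1 0"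
    "\<And>x. x \<in> cis ` T \<Longrightarrow> psi x = 1" "\<And>x. x \<in> cis ` C \<Longrightarrow> psi x = 0"
    using Urysohn[OF cT cC disj, of 1 0] by blast
  have psi01: "0 \<le> psi x" "psi x \<le> 1" for x
    using psi(2)[of x] by (auto simp: closed_segment_eq_real_ivl)
  define d where "d = sqrt (e / (16*pi))"
  have d: "d > 0" "d^2 * (2*pi) = e/8" unfolding d_def using e pi_gt_zero by auto
  obtain xs where xs: "\<And>t. cmod (complex_of_real (psi (cis t)) - tp xs t) < d"
    using SW_circle[OF continuous_on_subset[OF psi(1)] d(1)] by auto
  define P where "P t = complex_of_real (psi (cis t))" for t
  have measP[measurable]: "P \<in> borel_measurable circ" unfolding P_def
    by (intro continuous_imp_measurable_on_sets_lebesgue continuous_intros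
        continuous_on_compose2[OF psi(1) cont_cis]) auto
  have s2: "sqd P (tp xs) \<le> ennreal (e/8)"
    using sqd_unif[of P "tp xs" d] xs d by (auto simp: P_def less_imp_le)
  define B where "B = (U' - T) \<union> {0, 2*pi}"
  have ivl: "{0<..<2*pi::real} \<in> sets lebesgue" by simp
  have U'leb: "U' \<in> sets lebesgue" unfolding U'_def using Uleb ivl by (rule sets.Int)
  have fin: "{0, 2*pi::real} \<in> sets lebesgue" by simp
  have Bleb: "B \<in> sets lebesgue" unfolding B_def by (intro sets.Un sets.Diff U'leb Tleb fin)
  have Bc: "B \<in> sets circ" unfolding sets_circ using Bleb unfolding B_def U'_def by auto
  have "emeasure circ B = emeasure lebesgue B" by (rule emeasure_circ[OF Bc])
  also have "\<dots> \<le> emeasure lebesgue (U' - T) + emeasure lebesgue {0, 2*pi::real}"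
    unfolding B_def by (intro emeasure_subadditive sets.Diff U'leb Tleb fin)
  also have "emeasure lebesgue {0, 2*pi::real} = 0"
    by (simp add: emeasure_lborel_countable)
  also have "emeasure lebesgue (U' - T) \<le> emeasure lebesgue ((U - A') \<union> (A' - T))"
    by (rule emeasure_mono) (use Uleb Tleb A'leb in \<open>auto simp: U'_def\<close>)
  also have "\<dots> \<le> emeasure lebesgue (U - A') + emeasure lebesgue (A' - T)"
    by (intro emeasure_subadditive sets.Diff Uleb Tleb A'leb)
  also have "\<dots> \<le> ennreal (e/8) + ennreal (e/8)" using T(4) U(4) by (intro add_mono) auto
  also have "\<dots> = ennreal (e/4)" using e by (simp add: ennreal_plus[symmetric])
  finally have mB: "emeasure circ B \<le> ennreal (e/4)" by simp
  have s1: "sqd (\<lambda>t. complex_of_real (indicator A t)) P \<le> ennreal (e/4)"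
  proof -
    have "sqd (\<lambda>t. complex_of_real (indicator A t)) P \<le> (\<integral>\<^sup>+t. indicator B t \<partial>circ)"
      unfolding sqd_def
    proof (intro nn_integral_mono)
      fix t assume t: "t \<in> space circ"
      define x where "x = indicator A t - psi (cis t)"
      have cx: "cmod (complex_of_real (indicator A t) - P t) = \<bar>x\<bar>"
        unfolding P_def x_def by (simp only: of_real_diff[symmetric] norm_of_real)
      show "ennreal ((cmod (complex_of_real (indicator A t) - P t))\<^sup>2) \<le> indicator B t"
      proof (cases "t \<in> B")
        case True
        have "0 \<le> (indicator A t::real)" "(indicator A t::real) \<le> 1" by (auto simp: indicator_def)
        then have "\<bar>x\<bar> \<le> 1" using psi01[of "cis t"] unfolding x_def by linarith
        then have "\<bar>x\<bar>^2 \<le> 1" by (simp add: abs_square_le_1)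
        then show ?thesis using True cx by (simp add: indicator_def)
      next
        case False
        then have t0: "0 < t" "t < 2*pi" using t unfolding B_def by auto
        have "x = 0"
        proof (cases "t \<in> T")
          case True
          then have "t \<in> A" using T(2) A'_def by auto
          then show ?thesis using psi(3)[of "cis t"] True unfolding x_def by simp
        next
          case False
          then have "t \<notin> U'" using \<open>t \<notin> B\<close> unfolding B_def by auto
          then have "t \<in> C" "t \<notin> A" using t0 U(2) unfolding C_def U'_def A'_def by auto
          then show ?thesis using psi(4)[of "cis t"] unfolding x_def by simp
        qed
        then show ?thesis using cx by simp
      qed
    qed
    also have "\<dots> = emeasure circ B" by (rule nn_integral_indicator[OF Bc])
    finally show ?thesis using mB by simp
  qed
  have measI[measurable]: "(\<lambda>t. complex_of_real (indicator A t)) \<in> borel_measurable circ"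
    by (rule measurable_compose[OF borel_measurable_indicator[OF A] borel_measurable_of_real])
  have "sqd (\<lambda>t. complex_of_real (indicator A t)) (tp xs) \<le> 2 * ennreal (e/4) + 2 * ennreal (e/8)"
    by (rule order_trans[OF sqd_tri[OF measI measP meas_tp]]) (intro add_mono mult_left_mono s1 s2; simp)
  also have "\<dots> = ennreal (2*(e/4)) + ennreal (2*(e/8))"
    using e by (simp only: two_ennreal)
  also have "\<dots> = ennreal (2*(e/4) + 2*(e/8))" using e by (simp only: ennreal_plus)
  also have "\<dots> = ennreal (3*e/4)" by (simp add: field_simps)
  also have "\<dots> < ennreal e" using e by (intro ennreal_lessI) auto
  finally show "\<exists>xs. sqd (\<lambda>t. complex_of_real (indicator A t)) (tp xs) < ennreal e" by blast
qed



lemma sqd_cong: "(\<And>t. t \<in> {0..2*pi} \<Longrightarrow> u t = v t) \<Longrightarrow> sqd u w = sqd v w"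
  unfolding sqd_def by (intro nn_integral_cong) simp

lemma apx_cong: "(\<And>t. t \<in> {0..2*pi} \<Longrightarrow> u t = v t) \<Longrightarrow> apx u \<Longrightarrow> apx v"
  unfolding apx_def using sqd_cong by metis

lemma apx_add:
  assumes [measurable]: "u \<in> borel_measurable circ" "v \<in> borel_measurable circ"
    and "apx u" "apx v"
  shows "apx (\<lambda>t. u t + v t)"
  unfolding apx_def
proof (intro allI impI)
  fix e :: real assume e: "e > 0"
  have e4: "e/8 > 0" using e by simp
  obtain xs where xs: "sqd u (tp xs) < ennreal (e/8)" using assms(3) e4 unfolding apx_def by blast
  obtain ys where ys: "sqd v (tp ys) < ennreal (e/8)" using assms(4) e4 unfolding apx_def by blast
  have pt: "(cmod (u t + v t - (tp xs t + tp ys t)))^2 \<le> 2 * (cmod (u t - tp xs t))^2 + 2 * (cmod (v t - tp ys t))^2" for t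
  proof -
    have "cmod (u t + v t - (tp xs t + tp ys t)) \<le> cmod (u t - tp xs t) + cmod (v t - tp ys t)"
      by (metis add_diff_add norm_triangle_ineq)
    then have "(cmod (u t + v t - (tp xs t + tp ys t)))^2 \<le> (cmod (u t - tp xs t) + cmod (v t - tp ys t))^2"
      by (simp add: power_mono)
    also have "\<dots> \<le> 2 * (cmod (u t - tp xs t))^2 + 2 * (cmod (v t - tp ys t))^2"
    proof -
      have "0 \<le> (cmod (u t - tp xs t) - cmod (v t - tp ys t))^2" by simp
      then show ?thesis by (simp add: power2_eq_square algebra_simps)
    qed
    finally show ?thesis .
  qed
  have "sqd (\<lambda>t. u t + v t) (tp (xs@ys)) \<le> (\<integral>\<^sup>+t. 2 * ennreal ((cmod (u t - tp xs t))^2) + 2 * ennreal ((cmod (v t - tp ys t))^2) \<partial>circ)"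
    unfolding sqd_def tp_append
    by (intro nn_integral_mono) (use pt in \<open>auto intro!: ennreal_le_2\<close>)
  also have "\<dots> = 2 * sqd u (tp xs) + 2 * sqd v (tp ys)"
    unfolding sqd_def by (simp add: nn_integral_add nn_integral_cmult)
  also have "\<dots> \<le> 2 * ennreal (e/8) + 2 * ennreal (e/8)"
    using xs ys by (intro add_mono mult_left_mono) auto
  also have "\<dots> = ennreal (2*(e/8)) + ennreal (2*(e/8))"
    using e by (simp only: two_ennreal)
  also have "\<dots> = ennreal (2*(e/8) + 2*(e/8))" using e by (simp only: ennreal_plus)
  also have "\<dots> < ennreal e" using e by (intro ennreal_lessI) auto
  finally show "\<exists>xs. sqd (\<lambda>t. u t + v t) (tp xs) < ennreal e" by blast
qed

lemma apx_cmult: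
  assumes [measurable]: "u \<in> borel_measurable circ" and "apx u"
  shows "apx (\<lambda>t. c * u t)"
  unfolding apx_def
proof (intro allI impI)
  fix e :: real assume e: "e > 0"
  define c2 where "c2 = (cmod c)^2 + 1"
  have c2: "c2 > 0" unfolding c2_def by (simp add: add_nonneg_pos)
  have ec: "e/c2 > 0" using e c2 by simp
  obtain xs where xs: "sqd u (tp xs) < ennreal (e/c2)" using assms(2) ec unfolding apx_def by blast
  define ys where "ys = map (\<lambda>(a,k). (c*a,k)) xs"
  have tys: "tp ys t = c * tp xs t" for t
    unfolding ys_def by (induction xs) (auto simp: algebra_simps)
  have "sqd (\<lambda>t. c * u t) (tp ys) \<le> (\<integral>\<^sup>+t. ennreal c2 * ennreal ((cmod (u t - tp xs t))^2) \<partial>circ)"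
    unfolding sqd_def
  proof (intro nn_integral_mono)
    fix t
    have "(cmod (c * u t - tp ys t))^2 = (cmod c)^2 * (cmod (u t - tp xs t))^2"
      unfolding tys by (simp add: right_diff_distrib[symmetric] norm_mult power_mult_distrib)
    also have "\<dots> \<le> c2 * (cmod (u t - tp xs t))^2" unfolding c2_def by (intro mult_right_mono) auto
    finally show "ennreal ((cmod (c * u t - tp ys t))^2) \<le> ennreal c2 * ennreal ((cmod (u t - tp xs t))^2)"
      using c2 by (simp add: ennreal_mult[symmetric] ennreal_leI)
  qed
  also have "\<dots> = ennreal c2 * sqd u (tp xs)"
    unfolding sqd_def by (simp add: nn_integral_cmult)
  also have "\<dots> < ennreal c2 * ennreal (e/c2)"
    using xs c2 by (simp add: ennreal_mult_strict_left_mono)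
  also have "\<dots> = ennreal (c2 * (e/c2))" by (rule ennreal_mult[symmetric]) (use c2 e in auto)
  also have "\<dots> = ennreal e" using c2 by simp
  finally show "\<exists>xs. sqd (\<lambda>t. c * u t) (tp xs) < ennreal e" by blast
qed

lemma apx_sum:
  assumes "finite S" "\<And>i. i \<in> S \<Longrightarrow> f i \<in> borel_measurable circ" "\<And>i. i \<in> S \<Longrightarrow> apx (f i)"
  shows "apx (\<lambda>t. \<Sum>i\<in>S. f i t)"
  using assms
proof (induction S rule: finite_induct)
  case empty
  have "apx (tp [])" unfolding apx_def sqd_def by (auto intro!: exI[of _ "[]"])
  then show ?case by (rule apx_cong[rotated]) simp
next
  case (insert x F)
  have m: "(\<lambda>t. \<Sum>i\<in>F. f i t) \<in> borel_measurable circ"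
    using insert.prems(1) by (intro borel_measurable_sum) auto
  have "apx (\<lambda>t. f x t + (\<Sum>i\<in>F. f i t))"
    by (rule apx_add) (use insert m in auto)
  then show ?case using insert.hyps by simp
qed

lemma apx_simple:
  assumes "simple_function circ F"
  shows "apx (F :: real \<Rightarrow> complex)"
proof -
  have fin: "finite (F ` space circ)" by (rule simple_functionD(1)[OF assms])
  have sets: "F -` {y} \<inter> space circ \<in> sets circ" for y
    by (rule simple_functionD(2)[OF assms])
  have "apx (\<lambda>t. \<Sum>y\<in>F ` space circ. y * complex_of_real (indicator (F -` {y} \<inter> space circ) t))"
  proof (rule apx_sum[OF fin])
    fix y
    have mi: "(\<lambda>t. complex_of_real (indicator (F -` {y} \<inter> space circ) t)) \<in> borel_measurable circ"
      by (rule measurable_compose[OF borel_measurable_indicator[OF sets] borel_measurable_of_real])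
    then show "(\<lambda>t. y * complex_of_real (indicator (F -` {y} \<inter> space circ) t)) \<in> borel_measurable circ"
      by (intro borel_measurable_times borel_measurable_const)
    show "apx (\<lambda>t. y * complex_of_real (indicator (F -` {y} \<inter> space circ) t))"
      by (rule apx_cmult[OF mi apx_indicator[OF sets]])
  qed
  then show ?thesis
  proof (rule apx_cong[rotated])
    fix t assume t: "t \<in> {0..2*pi}"
    have "F t = (\<Sum>y\<in>F ` space circ. indicator (F -` {y} \<inter> space circ) t *\<^sub>R y)"
      by (rule simple_function_indicator_representation_banach[OF assms]) (use t in simp)
    also have "\<dots> = (\<Sum>y\<in>F ` space circ. y * complex_of_real (indicator (F -` {y} \<inter> space circ) t))"
      by (intro sum.cong refl) (simp only: scaleR_conv_of_real mult.commute)
    finally show "(\<Sum>y\<in>F ` space circ. y * complex_of_real (indicator (F -` {y} \<inter> space circ) t)) = F t" by (rule sym)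
  qed
qed



lemma apx_L2:
  assumes "L2 u"
  shows "apx u"
proof -
  have m[measurable]: "u \<in> borel_measurable circ" and int: "integrable circ (\<lambda>t. (cmod (u t))^2)"
    using assms by (auto simp: L2_def)
  obtain F where F: "\<And>i. simple_function circ (F i)" "\<And>x. x \<in> space circ \<Longrightarrow> (\<lambda>i. F i x) \<longlonglongrightarrow> u x"
    "\<And>i x. x \<in> space circ \<Longrightarrow> dist (F i x) 0 \<le> 2 * dist (u x) 0"
    using borel_measurable_implies_sequence_metric[OF m, of 0] by blast
  have mF[measurable]: "F i \<in> borel_measurable circ" for i using F(1) by (rule borel_measurable_simple_function)
  define g where "g i t = (cmod (u t - F i t))^2" for i t
  have mg[measurable]: "g i \<in> borel_measurable circ" for i unfolding g_def by measurable
  have lim: "(\<lambda>i. (\<integral>\<^sup>+x. norm (0 - g i x) \<partial>circ)) \<longlonglongrightarrow> 0"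
  proof (rule nn_integral_dominated_convergence_norm[where w = "\<lambda>t. 9 * (cmod (u t))^2"])
    show "(\<lambda>t. 9 * (cmod (u t))^2) \<in> borel_measurable circ" by measurable
    show "(\<lambda>x. 0) \<in> borel_measurable circ" by simp
    show "g i \<in> borel_measurable circ" for i by (rule mg)
    show "AE x in circ. norm (g i x) \<le> 9 * (cmod (u x))^2" for i
    proof (rule AE_I2)
      fix x assume x: "x \<in> space circ"
      have "cmod (u x - F i x) \<le> cmod (u x) + cmod (F i x)" by (rule norm_triangle_ineq4)
      also have "cmod (F i x) \<le> 2 * cmod (u x)" using F(3)[OF x, of i] by simp
      finally have "cmod (u x - F i x) \<le> 3 * cmod (u x)" by simp
      then have "(cmod (u x - F i x))^2 \<le> (3 * cmod (u x))^2" by (intro power_mono) auto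
      then show "norm (g i x) \<le> 9 * (cmod (u x))^2" by (simp add: g_def power_mult_distrib)
    qed
    have "(\<integral>\<^sup>+x. ennreal (9 * (cmod (u x))^2) \<partial>circ) = ennreal (integral\<^sup>L circ (\<lambda>x. 9 * (cmod (u x))^2))"
      by (rule nn_integral_eq_integral) (use int in auto)
    then show "(\<integral>\<^sup>+x. ennreal (9 * (cmod (u x))^2) \<partial>circ) < \<infinity>" by simp
    show "AE x in circ. (\<lambda>i. g i x) \<longlonglongrightarrow> 0"
    proof (rule AE_I2)
      fix x assume x: "x \<in> space circ"
      have "(\<lambda>i. u x - F i x) \<longlonglongrightarrow> u x - u x" by (intro tendsto_intros F(2)[OF x])
      then have "(\<lambda>i. (cmod (u x - F i x))^2) \<longlonglongrightarrow> (cmod (u x - u x))^2" by (intro tendsto_power tendsto_norm)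
      then show "(\<lambda>i. g i x) \<longlonglongrightarrow> 0" by (simp add: g_def)
    qed
  qed
  have sq: "sqd u (F i) = (\<integral>\<^sup>+x. norm (0 - g i x) \<partial>circ)" for i
    unfolding sqd_def g_def by simp
  show ?thesis unfolding apx_def
  proof (intro allI impI)
    fix e :: real assume e: "e > 0"
    have "eventually (\<lambda>i. sqd u (F i) < ennreal (e/8)) sequentially"
      using lim e unfolding sq[symmetric] by (intro order_tendstoD(2)) auto
    then obtain i where i: "sqd u (F i) < ennreal (e/8)" by (metis eventually_sequentially order_refl)
    have e8: "e/8 > 0" using e by simp
    obtain xs where xs: "sqd (F i) (tp xs) < ennreal (e/8)"
      using apx_simple[OF F(1)] e8 unfolding apx_def by blast
    have "sqd u (tp xs) \<le> 2 * sqd u (F i) + 2 * sqd (F i) (tp xs)"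
      by (rule sqd_tri) measurable
    also have "\<dots> \<le> 2 * ennreal (e/8) + 2 * ennreal (e/8)"
      using xs i by (intro add_mono mult_left_mono) auto
    also have "\<dots> = ennreal (2*(e/8)) + ennreal (2*(e/8))"
      using e by (simp only: two_ennreal)
    also have "\<dots> = ennreal (2*(e/8) + 2*(e/8))" using e by (simp only: ennreal_plus)
    also have "\<dots> < ennreal e" using e by (intro ennreal_lessI) auto
    finally show "\<exists>xs. sqd u (tp xs) < ennreal e" by blast
  qed
qed



lemma fin_circ: "finite_measure circ"
  by (rule finite_measure_lebesgue_on) simp

lemma integrable_const_circ: "integrable circ (\<lambda>t. c::'a::{banach,second_countable_topology})"
  using finite_measure.integrable_const[OF fin_circ] .

lemma meas_cnj[measurable]: "g \<in> borel_measurable M \<Longrightarrow> (\<lambda>x. cnj (g x)) \<in> borel_measurable M"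
  by (rule borel_measurable_continuous_on[where f=cnj]) (auto intro: continuous_intros)

lemma L2_meas[measurable_dest]: "L2 f \<Longrightarrow> f \<in> borel_measurable circ"
  by (simp add: L2_def)

lemma L2_sq: "L2 f \<Longrightarrow> integrable circ (\<lambda>t. (cmod (f t))^2)"
  by (simp add: L2_def)

lemma L2_bounded:
  assumes "f \<in> borel_measurable circ" "AE t in circ. cmod (f t) \<le> C"
  shows "L2 f"
  unfolding L2_def
proof
  show "f \<in> borel_measurable circ" by fact
  show "integrable circ (\<lambda>t. (cmod (f t))^2)"
  proof (rule Bochner_Integration.integrable_bound[OF integrable_const_circ[of "C^2"]])
    show "(\<lambda>t. (cmod (f t))^2) \<in> borel_measurable circ" using assms(1) by measurable
    show "AE t in circ. norm ((cmod (f t))^2) \<le> norm (C^2)"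
      using assms(2) by eventually_elim (auto intro!: power_mono)
  qed
qed

lemma L2_tp: "L2 (tp xs)"
  by (rule L2_bounded[OF meas_tp AE_I2[OF tp_bound]])

lemma L2_ex: "L2 (ex k)"
  by (rule L2_bounded[OF meas_ex, where C=1]) simp

lemma L2_add:
  assumes "L2 f" "L2 g"
  shows "L2 (\<lambda>t. f t + g t)"
  unfolding L2_def
proof
  have [measurable]: "f \<in> borel_measurable circ" "g \<in> borel_measurable circ" using assms by (auto simp: L2_def)
  show "(\<lambda>t. f t + g t) \<in> borel_measurable circ" by measurable
  show "integrable circ (\<lambda>t. (cmod (f t + g t))^2)"
  proof (rule Bochner_Integration.integrable_bound)
    show "integrable circ (\<lambda>t. 2 * (cmod (f t))^2 + 2 * (cmod (g t))^2)"
      using assms by (auto simp: L2_def)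
    show "(\<lambda>t. (cmod (f t + g t))^2) \<in> borel_measurable circ" by measurable
    show "AE t in circ. norm ((cmod (f t + g t))^2) \<le> norm (2 * (cmod (f t))^2 + 2 * (cmod (g t))^2)"
    proof (rule AE_I2)
      fix t
      have "cmod (f t + g t) \<le> cmod (f t) + cmod (g t)" by (rule norm_triangle_ineq)
      then have "(cmod (f t + g t))^2 \<le> (cmod (f t) + cmod (g t))^2" by (intro power_mono) auto
      also have "\<dots> \<le> 2 * (cmod (f t))^2 + 2 * (cmod (g t))^2"
      proof -
        have "0 \<le> (cmod (f t) - cmod (g t))^2" by simp
        then show ?thesis by (simp add: power2_eq_square algebra_simps)
      qed
      finally show "norm ((cmod (f t + g t))^2) \<le> norm (2 * (cmod (f t))^2 + 2 * (cmod (g t))^2)" by simp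
    qed
  qed
qed

lemma L2_bmult:
  assumes "L2 f" "g \<in> borel_measurable circ" "AE t in circ. cmod (g t) \<le> C"
  shows "L2 (\<lambda>t. g t * f t)"
  unfolding L2_def
proof
  have [measurable]: "f \<in> borel_measurable circ" "g \<in> borel_measurable circ" using assms by (auto simp: L2_def)
  show "(\<lambda>t. g t * f t) \<in> borel_measurable circ" by measurable
  show "integrable circ (\<lambda>t. (cmod (g t * f t))^2)"
  proof (rule Bochner_Integration.integrable_bound)
    show "integrable circ (\<lambda>t. C^2 * (cmod (f t))^2)"
      using assms by (auto simp: L2_def)
    show "(\<lambda>t. (cmod (g t * f t))^2) \<in> borel_measurable circ" by measurable
    show "AE t in circ. norm ((cmod (g t * f t))^2) \<le> norm (C^2 * (cmod (f t))^2)"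
      using assms(3)
    proof eventually_elim
      case (elim t)
      have "(cmod (g t * f t))^2 = (cmod (g t))^2 * (cmod (f t))^2" by (simp add: norm_mult power_mult_distrib)
      also have "\<dots> \<le> C^2 * (cmod (f t))^2" using elim by (intro mult_right_mono power_mono) auto
      finally show ?case by simp
    qed
  qed
qed

lemma L2_cmult: "L2 f \<Longrightarrow> L2 (\<lambda>t. c * f t)"
  using L2_bmult[of f "\<lambda>_. c" "cmod c"] by simp

lemma L2_diff: "L2 f \<Longrightarrow> L2 g \<Longrightarrow> L2 (\<lambda>t. f t - g t)"
  using L2_add[of f "\<lambda>t. (-1) * g t"] L2_cmult[of g "-1"] by simp

lemma L2_int: "L2 f \<Longrightarrow> integrable circ f"
proof -
  assume a: "L2 f"
  show ?thesis
  proof (rule Bochner_Integration.integrable_bound)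
    show "integrable circ (\<lambda>t. 1 + (cmod (f t))^2)"
      using a by (auto simp: L2_def integrable_const_circ)
    show "f \<in> borel_measurable circ" using a by (simp add: L2_def)
    show "AE t in circ. norm (f t) \<le> norm (1 + (cmod (f t))^2)"
    proof (rule AE_I2)
      fix t
      define x where "x = cmod (f t)"
      have x0: "0 \<le> x" unfolding x_def by simp
      have "x \<le> 1 + x^2"
      proof (cases "x \<le> 1")
        case True
        have "0 \<le> x^2" by simp
        then show ?thesis using True by linarith
      next
        case False
        then have "x * 1 \<le> x * x" using x0 by (intro mult_left_mono) auto
        then show ?thesis by (simp add: power2_eq_square)
      qed
      then have "cmod (f t) \<le> 1 + (cmod (f t))^2" unfolding x_def .
      then show "norm (f t) \<le> norm (1 + (cmod (f t))^2)" by simp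
    qed
  qed
qed

lemma L2_prod: "L2 f \<Longrightarrow> L2 g \<Longrightarrow> integrable circ (\<lambda>t. f t * cnj (g t))"
proof -
  assume a: "L2 f" "L2 g"
  have [measurable]: "f \<in> borel_measurable circ" "g \<in> borel_measurable circ" using a by (auto simp: L2_def)
  show ?thesis
  proof (rule Bochner_Integration.integrable_bound)
    show "integrable circ (\<lambda>t. (cmod (f t))^2 + (cmod (g t))^2)"
      using a by (auto simp: L2_def)
    show "(\<lambda>t. f t * cnj (g t)) \<in> borel_measurable circ" by measurable
    show "AE t in circ. norm (f t * cnj (g t)) \<le> norm ((cmod (f t))^2 + (cmod (g t))^2)"
    proof (rule AE_I2)
      fix t
      have "cmod (f t) * cmod (g t) \<le> (cmod (f t))^2 + (cmod (g t))^2"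
      proof -
        define a where "a = cmod (f t)"
        define b where "b = cmod (g t)"
        have h1: "0 \<le> a * b" unfolding a_def b_def by simp
        have "0 \<le> (a - b)^2" by simp
        then have h2: "2*(a*b) \<le> a^2 + b^2" by (simp add: power2_eq_square algebra_simps)
        from h1 h2 have "a * b \<le> a^2 + b^2" by linarith
        then show ?thesis unfolding a_def b_def .
      qed
      then show "norm (f t * cnj (g t)) \<le> norm ((cmod (f t))^2 + (cmod (g t))^2)" by (simp add: norm_mult)
    qed
  qed
qed

lemma sqd_L2: "L2 f \<Longrightarrow> L2 g \<Longrightarrow> sqd f g = ennreal (integral\<^sup>L circ (\<lambda>t. (cmod (f t - g t))^2))"
  unfolding sqd_def by (rule nn_integral_eq_integral) (auto dest: L2_diff L2_sq)



definition posl :: "(complex \<times> int) list \<Rightarrow> (complex \<times> int) list" where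
  "posl xs = filter (\<lambda>(c,k). 0 \<le> k) xs"
definition negl :: "(complex \<times> int) list \<Rightarrow> (complex \<times> int) list" where
  "negl xs = filter (\<lambda>(c,k). k < 0) xs"

lemma tp_split: "tp xs t = tp (posl xs) t + tp (negl xs) t"
  unfolding posl_def negl_def
proof (induction xs)
  case Nil then show ?case by simp
next
  case (Cons a xs) then show ?case by (cases a) auto
qed

lemma cnj_tp: "cnj (tp xs t) = tp (map (\<lambda>(c,k). (cnj c, -k)) xs) t"
proof (induction xs)
  case Nil then show ?case by simp
next
  case (Cons a xs) then show ?case by (cases a) (auto simp: cnj_ex)
qed

lemma int_tp_mult:
  assumes "\<And>k. integrable circ (\<lambda>t. ex k t * h t)"
  shows "integrable circ (\<lambda>t. tp xs t * h t) \<and>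
         integral\<^sup>L circ (\<lambda>t. tp xs t * h t) = (\<Sum>(c,k)\<leftarrow>xs. c * integral\<^sup>L circ (\<lambda>t. ex k t * h t))"
proof (induction xs)
  case Nil then show ?case by simp
next
  case (Cons a xs)
  obtain c k where a: "a = (c,k)" by fastforce
  have e: "(\<lambda>t. tp (a#xs) t * h t) = (\<lambda>t. c * (ex k t * h t) + tp xs t * h t)"
    by (simp add: a algebra_simps)
  have i1: "integrable circ (\<lambda>t. c * (ex k t * h t))" using assms by simp
  show ?case unfolding e using Cons i1 by (simp add: a)
qed

definition anti :: "(real \<Rightarrow> complex) \<Rightarrow> bool" where
  "anti F \<longleftrightarrow> (\<forall>k>0. integral\<^sup>L circ (\<lambda>t. ex k t * F t) = 0)"

lemma fcoeff_ex: "fcoeff f n = cint (\<lambda>t. f t * ex (-n) t)"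
  unfolding fcoeff_def ex_def by (simp add: algebra_simps)

lemma H2_anti: "H2 f \<Longrightarrow> anti f"
  unfolding anti_def
proof (intro allI impI)
  fix k :: int assume f: "H2 f" and k: "k > 0"
  then have "fcoeff f (-k) = 0" by (simp add: H2_def)
  then have "integral\<^sup>L circ (\<lambda>t. f t * ex k t) / complex_of_real (2*pi) = 0"
    by (simp add: fcoeff_ex cint_def)
  then show "integral\<^sup>L circ (\<lambda>t. ex k t * f t) = 0" by (simp add: mult.commute)
qed

lemma integrable_ex_L2: "L2 F \<Longrightarrow> integrable circ (\<lambda>t. ex k t * F t)"
proof -
  assume a: "L2 F"
  have "L2 (\<lambda>t. ex k t * F t)" by (rule L2_bmult[OF a meas_ex, where C=1]) simp
  then show ?thesis by (rule L2_int)
qed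

lemma anti_tp:
  assumes "\<And>c k. (c,k) \<in> set ys \<Longrightarrow> 0 \<le> k"
  shows "anti (tp ys)"
  unfolding anti_def
proof (intro allI impI)
  fix k :: int assume k: "k > 0"
  have "integral\<^sup>L circ (\<lambda>t. ex k t * tp ys t) = integral\<^sup>L circ (\<lambda>t. tp ys t * ex k t)"
    by (simp add: mult.commute)
  also have "\<dots> = (\<Sum>(c,j)\<leftarrow>ys. c * integral\<^sup>L circ (\<lambda>t. ex j t * ex k t))"
    using int_tp_mult[of "ex k" ys] integrable_ex_L2[OF L2_ex] by simp
  also have "\<dots> = (\<Sum>(c,j)\<leftarrow>ys. 0)"
  proof (intro arg_cong[where f = sum_list] map_cong refl)
    fix x assume x: "x \<in> set ys"
    obtain c j where cj: "x = (c,j)" by fastforce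
    have "j + k \<noteq> 0" using assms[of c j] x cj k by auto
    then show "(case x of (c,j) \<Rightarrow> c * integral\<^sup>L circ (\<lambda>t. ex j t * ex k t)) = (case x of (c,j) \<Rightarrow> 0)"
      by (simp add: cj ex_mult int_ex)
  qed
  also have "\<dots> = 0" by (induction ys) auto
  finally show "integral\<^sup>L circ (\<lambda>t. ex k t * tp ys t) = 0" .
qed

lemma anti_diff:
  assumes "anti F" "anti G" "L2 F" "L2 G"
  shows "anti (\<lambda>t. F t - G t)"
  unfolding anti_def
proof (intro allI impI)
  fix k :: int assume k: "k > 0"
  have "integral\<^sup>L circ (\<lambda>t. ex k t * (F t - G t)) = integral\<^sup>L circ (\<lambda>t. ex k t * F t - ex k t * G t)"
    by (simp add: algebra_simps)
  also have "\<dots> = integral\<^sup>L circ (\<lambda>t. ex k t * F t) - integral\<^sup>L circ (\<lambda>t. ex k t * G t)"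
    by (rule Bochner_Integration.integral_diff) (use integrable_ex_L2 assms in auto)
  also have "\<dots> = 0" using assms k by (simp add: anti_def)
  finally show "integral\<^sup>L circ (\<lambda>t. ex k t * (F t - G t)) = 0" .
qed

lemma anti_orth:
  assumes "anti F" "L2 F" "\<And>c k. (c,k) \<in> set ys \<Longrightarrow> k < 0"
  shows "integral\<^sup>L circ (\<lambda>t. F t * cnj (tp ys t)) = 0"
proof -
  define zs where "zs = map (\<lambda>(c,k). (cnj c, -k)) ys"
  have zpos: "0 < k" if "(c,k) \<in> set zs" for c k using that assms(3) unfolding zs_def by auto
  have "integral\<^sup>L circ (\<lambda>t. F t * cnj (tp ys t)) = integral\<^sup>L circ (\<lambda>t. tp zs t * F t)"
    by (simp add: cnj_tp zs_def mult.commute)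
  also have "\<dots> = (\<Sum>(c,k)\<leftarrow>zs. c * integral\<^sup>L circ (\<lambda>t. ex k t * F t))"
    using int_tp_mult[of F zs] integrable_ex_L2[OF assms(2)] by simp
  also have "\<dots> = (\<Sum>(c,k)\<leftarrow>zs. 0)"
  proof (intro arg_cong[where f = sum_list] map_cong refl)
    fix x assume x: "x \<in> set zs"
    obtain c j where cj: "x = (c,j)" by fastforce
    then show "(case x of (c,k) \<Rightarrow> c * integral\<^sup>L circ (\<lambda>t. ex k t * F t)) = (case x of (c,k) \<Rightarrow> 0)"
      using zpos[of c j] x assms(1) by (simp add: anti_def)
  qed
  also have "\<dots> = 0" by (induction zs) auto
  finally show ?thesis .
qed

lemma pythag:
  assumes "H2 f"
  shows "integral\<^sup>L circ (\<lambda>t. (cmod (f t - tp (posl xs) t))^2) \<le> integral\<^sup>L circ (\<lambda>t. (cmod (f t - tp xs t))^2)"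
proof -
  have Lf: "L2 f" using assms by (simp add: H2_def)
  define F where "F t = f t - tp (posl xs) t" for t
  define B where "B t = tp (negl xs) t" for t
  have LF: "L2 F" unfolding F_def by (intro L2_diff Lf L2_tp)
  have LB: "L2 B" unfolding B_def by (rule L2_tp)
  have aF: "anti F" unfolding F_def
    by (intro anti_diff H2_anti assms anti_tp Lf L2_tp) (auto simp: posl_def)
  have o1: "integral\<^sup>L circ (\<lambda>t. F t * cnj (B t)) = 0"
    unfolding B_def by (rule anti_orth[OF aF LF]) (auto simp: negl_def)
  have o2: "integral\<^sup>L circ (\<lambda>t. B t * cnj (F t)) = 0"
  proof -
    have "integral\<^sup>L circ (\<lambda>t. B t * cnj (F t)) = integral\<^sup>L circ (\<lambda>t. cnj (F t * cnj (B t)))"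
      by (simp add: mult.commute)
    also have "\<dots> = cnj (integral\<^sup>L circ (\<lambda>t. F t * cnj (B t)))" by (rule Bochner_Integration.integral_cnj)
    finally show ?thesis using o1 by simp
  qed
  have dec: "f t - tp xs t = F t - B t" for t unfolding F_def B_def using tp_split[of xs t] by simp
  have pt: "complex_of_real ((cmod (F t - B t))^2) = F t * cnj (F t) - F t * cnj (B t) - B t * cnj (F t) + B t * cnj (B t)" for t
    unfolding complex_norm_square by (simp add: algebra_simps)
  have iFF: "integrable circ (\<lambda>t. F t * cnj (F t))" by (rule L2_prod[OF LF LF])
  have iFB: "integrable circ (\<lambda>t. F t * cnj (B t))" by (rule L2_prod[OF LF LB])
  have iBF: "integrable circ (\<lambda>t. B t * cnj (F t))" by (rule L2_prod[OF LB LF])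
  have iBB: "integrable circ (\<lambda>t. B t * cnj (B t))" by (rule L2_prod[OF LB LB])
  have "complex_of_real (integral\<^sup>L circ (\<lambda>t. (cmod (F t - B t))^2)) = integral\<^sup>L circ (\<lambda>t. complex_of_real ((cmod (F t - B t))^2))"
    by (rule integral_complex_of_real[symmetric])
  also have "\<dots> = integral\<^sup>L circ (\<lambda>t. F t * cnj (F t) - F t * cnj (B t) - B t * cnj (F t) + B t * cnj (B t))"
    unfolding pt ..
  also have "\<dots> = integral\<^sup>L circ (\<lambda>t. F t * cnj (F t)) - integral\<^sup>L circ (\<lambda>t. F t * cnj (B t))
      - integral\<^sup>L circ (\<lambda>t. B t * cnj (F t)) + integral\<^sup>L circ (\<lambda>t. B t * cnj (B t))"
    using iFF iFB iBF iBB by simp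
  also have "\<dots> = integral\<^sup>L circ (\<lambda>t. complex_of_real ((cmod (F t))^2)) + integral\<^sup>L circ (\<lambda>t. complex_of_real ((cmod (B t))^2))"
    using o1 o2 unfolding complex_norm_square by simp
  also have "\<dots> = complex_of_real (integral\<^sup>L circ (\<lambda>t. (cmod (F t))^2) + integral\<^sup>L circ (\<lambda>t. (cmod (B t))^2))"
    by (simp only: integral_complex_of_real of_real_add)
  finally have eq: "integral\<^sup>L circ (\<lambda>t. (cmod (F t - B t))^2) = integral\<^sup>L circ (\<lambda>t. (cmod (F t))^2) + integral\<^sup>L circ (\<lambda>t. (cmod (B t))^2)"
    using of_real_eq_iff by blast
  have "0 \<le> integral\<^sup>L circ (\<lambda>t. (cmod (B t))^2)" by (rule integral_nonneg_AE) simp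
  then have "integral\<^sup>L circ (\<lambda>t. (cmod (F t))^2) \<le> integral\<^sup>L circ (\<lambda>t. (cmod (F t - B t))^2)"
    using eq by simp
  then show ?thesis unfolding dec unfolding F_def .
qed



lemma eps_bound:
  fixes x C :: real
  assumes C: "C > 0" and b: "\<And>r d. r > 0 \<Longrightarrow> d > 0 \<Longrightarrow> x \<le> C * (pi*r + d/(2*r))"
  shows "x \<le> 0"
proof (rule ccontr)
  assume "\<not> x \<le> 0"
  then have x: "x > 0" by simp
  define r where "r = x / (4*C*pi)"
  define d where "d = x * r / (2*C)"
  have r: "r > 0" unfolding r_def using x C by simp
  have d: "d > 0" unfolding d_def using x C r by simp
  have "C * (pi*r + d/(2*r)) = C * pi * r + C * d / (2*r)" by (simp add: algebra_simps)
  also have "C * pi * r = x/4" unfolding r_def using C by simp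
  also have "C * d / (2*r) = x/4" unfolding d_def using C r by (simp add: field_simps)
  finally have "C * (pi*r + d/(2*r)) = x/2" by simp
  with b[OF r d] x show False by simp
qed

lemma measure_circ: "measure circ {0..2*pi} = 2*pi"
  by (simp add: measure_def emeasure_circ_space)

lemma amgm: "r > 0 \<Longrightarrow> (y::real) \<le> (r + y^2/r)/2"
proof -
  assume r: "r > 0"
  have "0 \<le> (r - y)^2" by simp
  then have "2*r*y \<le> r^2 + y^2" by (simp add: power2_eq_square algebra_simps)
  then have "2*r*y/r \<le> (r^2 + y^2)/r" using r by (intro divide_right_mono) auto
  then show ?thesis using r by (simp add: field_simps power2_eq_square)
qed

lemma coeff_zero:
  assumes g: "Hinf g" and f: "H2 f" and m: "m > 0"
  shows "integral\<^sup>L circ (\<lambda>t. g t * f t * ex m t) = 0"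
proof -
  obtain C0 where C0: "AE t in circ. cmod (g t) \<le> C0" using g by (auto simp: Hinf_def)
  define C where "C = max C0 1"
  have C: "C > 0" "AE t in circ. cmod (g t) \<le> C" using C0 unfolding C_def by (auto elim: AE_mp)
  have Hg: "H2 g" using g by (simp add: Hinf_def)
  have Lg: "L2 g" and Lf: "L2 f" using Hg f by (auto simp: H2_def)
  have mg[measurable]: "g \<in> borel_measurable circ" using Lg by (simp add: L2_def)
  have ag: "anti g" by (rule H2_anti[OF Hg])
  let ?I = "integral\<^sup>L circ (\<lambda>t. g t * f t * ex m t)"
  have "cmod ?I \<le> 0"
  proof (rule eps_bound[OF C(1)])
    fix r d :: real assume r: "r > 0" and d: "d > 0"
    obtain xs where xs: "sqd f (tp xs) < ennreal d" using apx_L2[OF Lf] d unfolding apx_def by blast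
    define a where "a = posl xs"
    define w where "w t = f t - tp a t" for t
    have Lw: "L2 w" unfolding w_def by (intro L2_diff Lf L2_tp)
    have "integral\<^sup>L circ (\<lambda>t. (cmod (f t - tp xs t))^2) < d"
      using xs unfolding sqd_L2[OF Lf L2_tp] using d by (simp add: ennreal_less_iff)
    then have D: "integral\<^sup>L circ (\<lambda>t. (cmod (w t))^2) \<le> d"
      using pythag[OF f, of xs] unfolding w_def a_def by simp
    have L1: "L2 (\<lambda>t. ex m t * (g t * w t))"
      by (rule L2_bmult[OF L2_bmult[OF Lw mg C(2)] meas_ex, where C=1]) simp
    have L2': "L2 (\<lambda>t. ex m t * g t)"
      by (rule L2_bmult[OF Lg meas_ex, where C=1]) simp
    have i1: "integrable circ (\<lambda>t. ex m t * (g t * w t))" by (rule L2_int[OF L1])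
    have ih: "integrable circ (\<lambda>t. ex k t * (ex m t * g t))" for k
      by (rule integrable_ex_L2[OF L2'])
    have tpint: "integrable circ (\<lambda>t. tp a t * (ex m t * g t))"
      and tpval: "integral\<^sup>L circ (\<lambda>t. tp a t * (ex m t * g t)) = (\<Sum>(c,k)\<leftarrow>a. c * integral\<^sup>L circ (\<lambda>t. ex k t * (ex m t * g t)))"
      using int_tp_mult[of "\<lambda>t. ex m t * g t" a, OF ih] by auto
    have "(\<Sum>(c,k)\<leftarrow>a. c * integral\<^sup>L circ (\<lambda>t. ex k t * (ex m t * g t))) = (\<Sum>(c,k)\<leftarrow>a. 0)"
    proof (intro arg_cong[where f = sum_list] map_cong refl)
      fix x assume x: "x \<in> set a"
      obtain c k where ck: "x = (c,k)" by fastforce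
      have k: "k + m > 0" using x ck m unfolding a_def posl_def by auto
      have "integral\<^sup>L circ (\<lambda>t. ex k t * (ex m t * g t)) = integral\<^sup>L circ (\<lambda>t. ex (k+m) t * g t)"
        by (simp add: ex_mult[symmetric] mult.assoc)
      also have "\<dots> = 0" using ag k by (simp add: anti_def)
      finally show "(case x of (c,k) \<Rightarrow> c * integral\<^sup>L circ (\<lambda>t. ex k t * (ex m t * g t))) = (case x of (c,k) \<Rightarrow> 0)"
        by (simp add: ck)
    qed
    also have "\<dots> = 0" by (induction a) auto
    finally have second: "integral\<^sup>L circ (\<lambda>t. tp a t * (ex m t * g t)) = 0" using tpval by simp
    have split: "(\<lambda>t. g t * f t * ex m t) = (\<lambda>t. ex m t * (g t * w t) + tp a t * (ex m t * g t))"
      by (rule ext) (simp add: w_def algebra_simps)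
    have "?I = integral\<^sup>L circ (\<lambda>t. ex m t * (g t * w t))"
      unfolding split using i1 tpint second by simp
    then have "cmod ?I \<le> integral\<^sup>L circ (\<lambda>t. norm (ex m t * (g t * w t)))"
      by (simp add: integral_norm_bound)
    also have "\<dots> \<le> integral\<^sup>L circ (\<lambda>t. C * ((r + (cmod (w t))^2 / r) / 2))"
    proof (rule integral_mono_AE)
      show "integrable circ (\<lambda>t. norm (ex m t * (g t * w t)))" using i1 by simp
      show "integrable circ (\<lambda>t. C * ((r + (cmod (w t))^2 / r) / 2))"
        using L2_sq[OF Lw] by (simp add: integrable_const_circ)
      show "AE t in circ. norm (ex m t * (g t * w t)) \<le> C * ((r + (cmod (w t))^2 / r) / 2)"
        using C(2)
      proof eventually_elim
        case (elim t)
        have "norm (ex m t * (g t * w t)) = cmod (g t) * cmod (w t)" by (simp add: norm_mult)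
        also have "\<dots> \<le> C * cmod (w t)" using elim by (intro mult_right_mono) auto
        also have "\<dots> \<le> C * ((r + (cmod (w t))^2 / r) / 2)" using C(1) amgm[OF r] by (intro mult_left_mono) auto
        finally show ?case .
      qed
    qed
    also have "\<dots> = C * (pi * r + integral\<^sup>L circ (\<lambda>t. (cmod (w t))^2) / (2*r))"
    proof -
      have "integral\<^sup>L circ (\<lambda>t. C * ((r + (cmod (w t))^2 / r) / 2))
          = C / 2 * (integral\<^sup>L circ (\<lambda>t. r) + integral\<^sup>L circ (\<lambda>t. (cmod (w t))^2) / r)"
        using L2_sq[OF Lw] by (simp add: integrable_const_circ algebra_simps)
      also have "integral\<^sup>L circ (\<lambda>t. r) = 2*pi*r" using measure_circ by simp
      finally show ?thesis by (simp add: field_simps)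
    qed
    also have "\<dots> \<le> C * (pi * r + d / (2*r))"
      using D C(1) r by (intro mult_left_mono add_left_mono divide_right_mono) auto
    finally show "cmod ?I \<le> C * (pi * r + d / (2*r))" .
  qed
  then show ?thesis by simp
qed

lemma H2_mult:
  assumes g: "Hinf g" and f: "H2 f"
  shows "H2 (\<lambda>t. g t * f t)"
proof -
  obtain C where C: "AE t in circ. cmod (g t) \<le> C" using g by (auto simp: Hinf_def)
  have Lg: "L2 g" and Lf: "L2 f" using g f by (auto simp: H2_def Hinf_def)
  have "L2 (\<lambda>t. g t * f t)" by (rule L2_bmult[OF Lf _ C]) (use Lg in \<open>simp add: L2_def\<close>)
  moreover have "fcoeff (\<lambda>t. g t * f t) n = 0" if "n < 0" for n
  proof -
    have "fcoeff (\<lambda>t. g t * f t) n = integral\<^sup>L circ (\<lambda>t. g t * f t * ex (-n) t) / complex_of_real (2*pi)"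
      by (simp add: fcoeff_ex cint_def)
    also have "\<dots> = 0" using coeff_zero[OF g f, of "-n"] that by simp
    finally show ?thesis .
  qed
  ultimately show ?thesis by (simp add: H2_def)
qed



lemma H2_meas: "H2 f \<Longrightarrow> f \<in> borel_measurable circ"
  by (simp add: H2_def L2_def)

lemma Hinf_meas: "Hinf f \<Longrightarrow> f \<in> borel_measurable circ"
  by (simp add: Hinf_def H2_meas)

lemma cint_cong_AE:
  assumes "f \<in> borel_measurable circ" "g \<in> borel_measurable circ" "AE t in circ. f t = g t"
  shows "cint f = cint g"
  unfolding cint_def using integral_cong_AE[OF assms] by simp

lemma cint_cnj: "cint (\<lambda>t. cnj (f t)) = cnj (cint f)"
  unfolding cint_def by (simp add: Bochner_Integration.integral_cnj)

lemma H2_pow: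
  assumes "Hinf \<phi>" "H2 f"
  shows "H2 (\<lambda>t. (\<phi> t)^j * f t)"
proof (induction j)
  case 0 then show ?case using assms(2) by simp
next
  case (Suc j)
  have "H2 (\<lambda>t. \<phi> t * ((\<phi> t)^j * f t))" by (rule H2_mult[OF assms(1) Suc])
  then show ?case by (simp add: mult.assoc)
qed

lemma unimod: "cmod z = 1 \<Longrightarrow> z * cnj z = 1"
  using complex_norm_square[of z] by simp

theorem proposition2p2:
  fixes \<phi> :: "real \<Rightarrow> complex"
  assumes "Hinf \<phi>" and "AE t in circ. cmod (\<phi> t) \<le> 1"
  shows "(\<forall>f I. T_inner \<phi> f \<and> inner_fun I \<longrightarrow> T_inner \<phi> (\<lambda>t. I t * f t))
       \<and> (\<forall>f \<Theta>. T_inner \<phi> f \<and> inner_fun \<Theta> \<and> H2 (\<lambda>t. f t / \<Theta> t)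
              \<longrightarrow> T_inner \<phi> (\<lambda>t. f t / \<Theta> t))
       \<and> (\<forall>f. H2 f \<and> hip f f = 1 \<and> is_riesz_proj (\<lambda>t. cnj (\<phi> t) * f t) (\<lambda>t. 0)
              \<longrightarrow> T_inner \<phi> f)"
proof (intro conjI allI impI)
  have mphi[measurable]: "\<phi> \<in> borel_measurable circ" by (rule Hinf_meas[OF assms(1)])
  fix f I assume a: "T_inner \<phi> f \<and> inner_fun I"
  then have Tf: "H2 f" "hip f f = 1" "\<And>n. n \<ge> 1 \<Longrightarrow> hip (\<lambda>t. (\<phi> t)^n * f t) f = 0"
    and I: "Hinf I" "AE t in circ. cmod (I t) = 1" by (auto simp: T_inner_def inner_fun_def)
  have [measurable]: "f \<in> borel_measurable circ" "I \<in> borel_measurable circ"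
    using Tf(1) I(1) by (auto intro: H2_meas Hinf_meas)
  have key: "AE t in circ. I t * cnj (I t) = 1" using I(2) by eventually_elim (rule unimod)
  show "T_inner \<phi> (\<lambda>t. I t * f t)"
    unfolding T_inner_def
  proof (intro conjI allI impI)
    show "H2 (\<lambda>t. I t * f t)" by (rule H2_mult[OF I(1) Tf(1)])
    have "hip (\<lambda>t. I t * f t) (\<lambda>t. I t * f t) = hip f f"
      unfolding hip_def
    proof (rule cint_cong_AE)
      show "AE t in circ. I t * f t * cnj (I t * f t) = f t * cnj (f t)"
        using key
      proof eventually_elim
        case (elim t)
        have "I t * f t * cnj (I t * f t) = (I t * cnj (I t)) * (f t * cnj (f t))" by (simp add: algebra_simps)
        then show ?case using elim by simp
      qed
    qed measurable
    then show "hip (\<lambda>t. I t * f t) (\<lambda>t. I t * f t) = 1" using Tf(2) by simp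
    fix n :: nat assume n: "n \<ge> 1"
    have "hip (\<lambda>t. (\<phi> t)^n * (I t * f t)) (\<lambda>t. I t * f t) = hip (\<lambda>t. (\<phi> t)^n * f t) f"
      unfolding hip_def
    proof (rule cint_cong_AE)
      show "AE t in circ. (\<phi> t)^n * (I t * f t) * cnj (I t * f t) = (\<phi> t)^n * f t * cnj (f t)"
        using key
      proof eventually_elim
        case (elim t)
        have "(\<phi> t)^n * (I t * f t) * cnj (I t * f t) = (I t * cnj (I t)) * ((\<phi> t)^n * f t * cnj (f t))"
          by (simp add: algebra_simps)
        then show ?case using elim by simp
      qed
    qed measurable
    then show "hip (\<lambda>t. (\<phi> t)^n * (I t * f t)) (\<lambda>t. I t * f t) = 0" using Tf(3)[OF n] by simp
  qed
next
  have mphi[measurable]: "\<phi> \<in> borel_measurable circ" by (rule Hinf_meas[OF assms(1)])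
  fix f \<Theta> assume a: "T_inner \<phi> f \<and> inner_fun \<Theta> \<and> H2 (\<lambda>t. f t / \<Theta> t)"
  then have Tf: "H2 f" "hip f f = 1" "\<And>n. n \<ge> 1 \<Longrightarrow> hip (\<lambda>t. (\<phi> t)^n * f t) f = 0"
    and I: "Hinf \<Theta>" "AE t in circ. cmod (\<Theta> t) = 1" and H: "H2 (\<lambda>t. f t / \<Theta> t)"
    by (auto simp: T_inner_def inner_fun_def)
  have [measurable]: "f \<in> borel_measurable circ" "\<Theta> \<in> borel_measurable circ"
    using Tf(1) I(1) by (auto intro: H2_meas Hinf_meas)
  have key: "AE t in circ. \<Theta> t * cnj (\<Theta> t) = 1" using I(2) by eventually_elim (rule unimod)
  show "T_inner \<phi> (\<lambda>t. f t / \<Theta> t)"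
    unfolding T_inner_def
  proof (intro conjI allI impI)
    show "H2 (\<lambda>t. f t / \<Theta> t)" by (rule H)
    have "hip (\<lambda>t. f t / \<Theta> t) (\<lambda>t. f t / \<Theta> t) = hip f f"
      unfolding hip_def
    proof (rule cint_cong_AE)
      show "AE t in circ. f t / \<Theta> t * cnj (f t / \<Theta> t) = f t * cnj (f t)"
        using key
      proof eventually_elim
        case (elim t)
        then show ?case by (simp add: field_simps complex_cnj_divide)
      qed
    qed measurable
    then show "hip (\<lambda>t. f t / \<Theta> t) (\<lambda>t. f t / \<Theta> t) = 1" using Tf(2) by simp
    fix n :: nat assume n: "n \<ge> 1"
    have "hip (\<lambda>t. (\<phi> t)^n * (f t / \<Theta> t)) (\<lambda>t. f t / \<Theta> t) = hip (\<lambda>t. (\<phi> t)^n * f t) f"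
      unfolding hip_def
    proof (rule cint_cong_AE)
      show "AE t in circ. (\<phi> t)^n * (f t / \<Theta> t) * cnj (f t / \<Theta> t) = (\<phi> t)^n * f t * cnj (f t)"
        using key
      proof eventually_elim
        case (elim t)
        then show ?case by (simp add: field_simps complex_cnj_divide)
      qed
    qed measurable
    then show "hip (\<lambda>t. (\<phi> t)^n * (f t / \<Theta> t)) (\<lambda>t. f t / \<Theta> t) = 0" using Tf(3)[OF n] by simp
  qed
next
  fix f assume a: "H2 f \<and> hip f f = 1 \<and> is_riesz_proj (\<lambda>t. cnj (\<phi> t) * f t) (\<lambda>t. 0)"
  then have f: "H2 f" "hip f f = 1" and R: "\<And>k. H2 k \<Longrightarrow> hip (\<lambda>t. cnj (\<phi> t) * f t - 0) k = 0"
    by (auto simp: is_riesz_proj_def)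
  show "T_inner \<phi> f"
    unfolding T_inner_def
  proof (intro conjI allI impI f)
    fix n :: nat assume n: "n \<ge> 1"
    then obtain j where j: "n = Suc j" by (cases n) auto
    have "hip (\<lambda>t. cnj (\<phi> t) * f t - 0) (\<lambda>t. (\<phi> t)^j * f t) = 0"
      by (rule R[OF H2_pow[OF assms(1) f(1)]])
    moreover have "hip (\<lambda>t. cnj (\<phi> t) * f t - 0) (\<lambda>t. (\<phi> t)^j * f t) = cnj (hip (\<lambda>t. (\<phi> t)^n * f t) f)"
      unfolding hip_def cint_cnj[symmetric] j by (simp add: algebra_simps)
    ultimately show "hip (\<lambda>t. (\<phi> t)^n * f t) f = 0" by simp
  qed
qed


end
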